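(* Let $Z_1,\dots,Z_k$ be independent continuous random variables, each symmetric about $0$ (with mean $0$), and let $Y=\max(Z_1,\dots,Z_k)$ with probability density function $f_Y$. Then for every $x\ge 0$, $f_Y(x)\ge f_Y(-x)$. *)

theory Defs
  imports "HOL-Probability.Probability"
begin

definition symmetric_rv :: "'a measure \<Rightarrow> ('a \<Rightarrow> real) \<Rightarrow> bool" where
  "symmetric_rv M X \<longleftrightarrow> distr M borel X = distr M borel (\<lambda>\<omega>. - X \<omega>)"

end

theory Submission
  imports Defs
begin

lemma AE_reflect:
  assumes "AE x in lborel. P x"
  shows "AE x in lborel. P (- x :: real)"
proof -
  have "AE x in distr lborel borel uminus. P x" unfolding lborel_distr_uminus by (rule assms)
  then show ?thesis by (rule AE_distrD[rotated]) simp
qed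

lemma sym_density:
  assumes "prob_space M" "distributed M lborel Z f" "symmetric_rv M Z"
  shows "AE x in lborel. f (-x) = f (x::real)"
proof -
  have Zm[measurable]: "Z \<in> borel_measurable M" using distributed_measurable[OF assms(2)] by simp
  have fm[measurable]: "f \<in> borel_measurable borel" using distributed_borel_measurable[OF assms(2)] by simp
  have d: "distr M lborel Z = density lborel f" using assms(2) by (simp add: distributed_def)
  have um: "distr lborel lborel uminus = (lborel::real measure)"
    using lborel_distr_uminus by (metis distr_cong sets_lborel)
  have "distr M lborel (\<lambda>\<omega>. - Z \<omega>) = distr (distr M lborel Z) lborel uminus"
    by (subst distr_distr) (auto simp: comp_def)
  also have "\<dots> = distr (density lborel f) lborel uminus" using d by simp
  also have "density lborel f = density (distr lborel lborel uminus) f" using um by simp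
  also have "\<dots> = distr (density lborel (\<lambda>x. f (-x))) lborel uminus" by (rule density_distr) auto
  also have "distr (distr (density lborel (\<lambda>x. f(-x))) lborel uminus) lborel uminus = density lborel (\<lambda>x. f(-x))"
    by (subst distr_distr) (auto simp: comp_def distr_id2)
  finally have e1: "distr M lborel (\<lambda>\<omega>. - Z \<omega>) = density lborel (\<lambda>x. f (-x))" .
  have "distr M lborel Z = distr M lborel (\<lambda>\<omega>. - Z \<omega>)"
    using assms(3) unfolding symmetric_rv_def by (metis distr_cong sets_lborel)
  then have "density lborel f = density lborel (\<lambda>x. f (-x))" using d e1 by simp
  then have "AE x in lborel. f x = f (-x)" by (intro sigma_finite_measure.density_unique[OF sigma_finite_lborel]) auto
  then show ?thesis by auto
qed

lemma Fm:
  fixes q :: "real \<Rightarrow> ennreal"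
  assumes [measurable]: "q \<in> borel_measurable borel"
  shows "(\<lambda>x. \<integral>\<^sup>+z. q z * indicator {..x} z \<partial>lborel) \<in> borel_measurable borel"
    "(\<lambda>x. \<integral>\<^sup>+z. q z * indicator {..<x} z \<partial>lborel) \<in> borel_measurable borel"
proof -
  have "Measurable.pred (borel \<Otimes>\<^sub>M borel) (\<lambda>xz::real\<times>real. snd xz \<le> fst xz)" by measurable
  then have S1: "{xz::real\<times>real. snd xz \<le> fst xz} \<in> sets (borel \<Otimes>\<^sub>M lborel)"
    by (simp add: pred_def space_pair_measure)
  have "Measurable.pred (borel \<Otimes>\<^sub>M borel) (\<lambda>xz::real\<times>real. snd xz < fst xz)" by measurable
  then have S2: "{xz::real\<times>real. snd xz < fst xz} \<in> sets (borel \<Otimes>\<^sub>M lborel)"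
    by (simp add: pred_def space_pair_measure)
  have "(\<lambda>xz::real\<times>real. q (snd xz) * indicator {xz. snd xz \<le> fst xz} xz) \<in> borel_measurable (borel \<Otimes>\<^sub>M lborel)"
    by (intro borel_measurable_times_ennreal borel_measurable_indicator S1) simp
  from lborel.borel_measurable_nn_integral_fst[OF this]
  show "(\<lambda>x. \<integral>\<^sup>+z. q z * indicator {..x} z \<partial>lborel) \<in> borel_measurable borel"
    by (simp add: indicator_def atMost_def)
  have "(\<lambda>xz::real\<times>real. q (snd xz) * indicator {xz. snd xz < fst xz} xz) \<in> borel_measurable (borel \<Otimes>\<^sub>M lborel)"
    by (intro borel_measurable_times_ennreal borel_measurable_indicator S2) simp
  from lborel.borel_measurable_nn_integral_fst[OF this]
  show "(\<lambda>x. \<integral>\<^sup>+z. q z * indicator {..<x} z \<partial>lborel) \<in> borel_measurable borel"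
    by (simp add: indicator_def lessThan_def)
qed

lemma indep_var_lborel:
  assumes "prob_space M" "prob_space.indep_var M borel X borel (Z::_\<Rightarrow>real)"
  shows "prob_space.indep_var M lborel (X::_\<Rightarrow>real) lborel Z"
proof -
  interpret prob_space M by fact
  have e: "case_bool lborel lborel = (\<lambda>_. lborel :: real measure)" "case_bool borel borel = (\<lambda>_. borel :: real measure)"
    by (auto simp: fun_eq_iff split: bool.split)
  show ?thesis using assms(2) unfolding indep_var_def e indep_vars_def by simp
qed

lemma max_density:
  fixes X Z :: "'a \<Rightarrow> real"
  assumes P: "prob_space M" and ind: "prob_space.indep_var M borel X borel Z"
   and dX: "distributed M lborel X p" and dZ: "distributed M lborel Z q"
  shows "distributed M lborel (\<lambda>\<omega>. max (X \<omega>) (Z \<omega>))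
     (\<lambda>x. p x * (\<integral>\<^sup>+z. q z * indicator {..x} z \<partial>lborel) + q x * (\<integral>\<^sup>+y. p y * indicator {..<x} y \<partial>lborel))"
    (is "distributed M lborel ?mx ?h")
proof -
  interpret prob_space M by fact
  have ind': "indep_var lborel X lborel Z" by (rule indep_var_lborel[OF P ind])
  have J: "distributed M (lborel \<Otimes>\<^sub>M lborel) (\<lambda>\<omega>. (X \<omega>, Z \<omega>)) (\<lambda>(x,z). p x * q z)"
    by (rule distributed_joint_indep[OF sigma_finite_lborel sigma_finite_lborel dX dZ ind'])
  have [measurable]: "X \<in> borel_measurable M" "Z \<in> borel_measurable M"
    using distributed_measurable[OF dX] distributed_measurable[OF dZ] by auto
  have [measurable]: "p \<in> borel_measurable borel" "q \<in> borel_measurable borel"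
    using distributed_borel_measurable[OF dX] distributed_borel_measurable[OF dZ] by auto
  have [measurable]: "(\<lambda>x. \<integral>\<^sup>+z. q z * indicator {..x} z \<partial>lborel) \<in> borel_measurable borel"
    "(\<lambda>x. \<integral>\<^sup>+z. p z * indicator {..<x} z \<partial>lborel) \<in> borel_measurable borel"
    using Fm[of q] Fm[of p] by auto
  have hm: "?h \<in> borel_measurable lborel" by measurable
  define L where "L = {xz::real\<times>real. snd xz \<le> fst xz}"
  define R where "R = {xz::real\<times>real. fst xz < snd xz}"
  have "Measurable.pred (borel \<Otimes>\<^sub>M borel) (\<lambda>xz::real\<times>real. snd xz \<le> fst xz)" by measurable
  then have L[measurable]: "L \<in> sets (lborel \<Otimes>\<^sub>M lborel)"
    unfolding L_def by (simp add: pred_def space_pair_measure)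
  have "Measurable.pred (borel \<Otimes>\<^sub>M borel) (\<lambda>xz::real\<times>real. fst xz < snd xz)" by measurable
  then have R[measurable]: "R \<in> sets (lborel \<Otimes>\<^sub>M lborel)"
    unfolding R_def by (simp add: pred_def space_pair_measure)
  have iL: "indicator L (x,z) = indicator {..x} z" for x z :: real
    by (simp add: L_def indicator_def)
  have iR: "indicator R (x,z) = indicator {..<z} x" for x z :: real
    by (simp add: R_def indicator_def)
  show ?thesis unfolding distributed_def
  proof (intro conjI hm)
    show "?mx \<in> measurable M lborel" by simp
    show "distr M lborel ?mx = density lborel ?h"
    proof (rule measure_eqI)
      show "sets (distr M lborel ?mx) = sets (density lborel ?h)" by simp
      fix B assume "B \<in> sets (distr M lborel ?mx)"
      then have B[measurable]: "B \<in> sets borel" by simp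
      define f1 where "f1 = (\<lambda>xz::real\<times>real. p (fst xz) * q (snd xz) * indicator B (fst xz) * indicator L xz)"
      define f2 where "f2 = (\<lambda>xz::real\<times>real. p (fst xz) * q (snd xz) * indicator B (snd xz) * indicator R xz)"
      have f1m[measurable]: "f1 \<in> borel_measurable (lborel \<Otimes>\<^sub>M lborel)" unfolding f1_def by measurable
      have f2m[measurable]: "f2 \<in> borel_measurable (lborel \<Otimes>\<^sub>M lborel)" unfolding f2_def by measurable
      have "emeasure (distr M lborel ?mx) B = emeasure M (?mx -` B \<inter> space M)"
        by (rule emeasure_distr) auto
      also have "\<dots> = emeasure M ((\<lambda>\<omega>. (X \<omega>, Z \<omega>)) -` {xz. max (fst xz) (snd xz) \<in> B} \<inter> space M)"
        by (intro arg_cong[where f="emeasure M"]) auto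
      also have "\<dots> = (\<integral>\<^sup>+xz. (\<lambda>(x,z). p x * q z) xz * indicator {xz. max (fst xz) (snd xz) \<in> B} xz \<partial>(lborel \<Otimes>\<^sub>M lborel))"
      proof -
        have "Measurable.pred (borel \<Otimes>\<^sub>M borel) (\<lambda>xz::real\<times>real. max (fst xz) (snd xz) \<in> B)" by measurable
        then have "{xz::real\<times>real. max (fst xz) (snd xz) \<in> B} \<in> sets (lborel \<Otimes>\<^sub>M lborel)"
          by (simp add: pred_def space_pair_measure)
        then show ?thesis by (rule distributed_emeasure[OF J])
      qed
      also have "\<dots> = (\<integral>\<^sup>+xz. f1 xz + f2 xz \<partial>(lborel \<Otimes>\<^sub>M lborel))"
      proof (intro nn_integral_cong)
        fix xz :: "real \<times> real"
        obtain a b where xz: "xz = (a,b)" by (cases xz)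
        show "(\<lambda>(x,z). p x * q z) xz * indicator {xz. max (fst xz) (snd xz) \<in> B} xz = f1 xz + f2 xz"
          unfolding xz f1_def f2_def L_def R_def
          by (cases "b \<le> a") (auto split: split_indicator simp: max_def)
      qed
      also have "\<dots> = (\<integral>\<^sup>+xz. f1 xz \<partial>(lborel \<Otimes>\<^sub>M lborel)) + (\<integral>\<^sup>+xz. f2 xz \<partial>(lborel \<Otimes>\<^sub>M lborel))"
        by (rule nn_integral_add) (use f1m f2m in auto)
      also have "(\<integral>\<^sup>+xz. f1 xz \<partial>(lborel \<Otimes>\<^sub>M lborel)) = (\<integral>\<^sup>+x. \<integral>\<^sup>+z. f1 (x,z) \<partial>lborel \<partial>lborel)"
        using lborel.nn_integral_fst[OF f1m] by simp
      also have "\<dots> = (\<integral>\<^sup>+x. p x * (\<integral>\<^sup>+z. q z * indicator {..x} z \<partial>lborel) * indicator B x \<partial>lborel)"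
      proof (intro nn_integral_cong)
        fix x :: real
        have "(\<integral>\<^sup>+z. f1 (x,z) \<partial>lborel)
            = (\<integral>\<^sup>+z. (p x * indicator B x) * (q z * indicator {..x} z) \<partial>lborel)"
          by (intro nn_integral_cong) (simp add: f1_def iL mult_ac)
        also have "\<dots> = (p x * indicator B x) * (\<integral>\<^sup>+z. q z * indicator {..x} z \<partial>lborel)"
          by (rule nn_integral_cmult) measurable
        finally show "(\<integral>\<^sup>+z. f1 (x,z) \<partial>lborel)
           = p x * (\<integral>\<^sup>+z. q z * indicator {..x} z \<partial>lborel) * indicator B x" by (simp add: mult_ac)
      qed
      also have "(\<integral>\<^sup>+xz. f2 xz \<partial>(lborel \<Otimes>\<^sub>M lborel)) = (\<integral>\<^sup>+z. \<integral>\<^sup>+x. f2 (x,z) \<partial>lborel \<partial>lborel)"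
        using lborel_pair.nn_integral_snd[OF f2m] by simp
      also have "\<dots> = (\<integral>\<^sup>+z. q z * (\<integral>\<^sup>+y. p y * indicator {..<z} y \<partial>lborel) * indicator B z \<partial>lborel)"
      proof (intro nn_integral_cong)
        fix z :: real
        have "(\<integral>\<^sup>+x. f2 (x,z) \<partial>lborel)
            = (\<integral>\<^sup>+x. (q z * indicator B z) * (p x * indicator {..<z} x) \<partial>lborel)"
          by (intro nn_integral_cong) (simp add: f2_def iR mult_ac)
        also have "\<dots> = (q z * indicator B z) * (\<integral>\<^sup>+x. p x * indicator {..<z} x \<partial>lborel)"
          by (rule nn_integral_cmult) measurable
        finally show "(\<integral>\<^sup>+x. f2 (x,z) \<partial>lborel)
           = q z * (\<integral>\<^sup>+y. p y * indicator {..<z} y \<partial>lborel) * indicator B z" by (simp add: mult_ac)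
      qed
      also have "(\<integral>\<^sup>+x. p x * (\<integral>\<^sup>+z. q z * indicator {..x} z \<partial>lborel) * indicator B x \<partial>lborel)
          + (\<integral>\<^sup>+z. q z * (\<integral>\<^sup>+y. p y * indicator {..<z} y \<partial>lborel) * indicator B z \<partial>lborel)
          = (\<integral>\<^sup>+x. ?h x * indicator B x \<partial>lborel)"
        by (subst nn_integral_add[symmetric]) (measurable, simp add: distrib_right)
      also have "\<dots> = emeasure (density lborel ?h) B"
        by (rule emeasure_density[symmetric]) (use hm in auto)
      finally show "emeasure (distr M lborel ?mx) B = emeasure (density lborel ?h) B" .
    qed
  qed
qed


lemma max_density_ineq:
  fixes p q :: "real \<Rightarrow> ennreal"
  assumes "AE x in lborel. 0 \<le> x \<longrightarrow> p (-x) \<le> p x" "AE x in lborel. 0 \<le> x \<longrightarrow> q (-x) \<le> q x"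
  shows "AE x in lborel. 0 \<le> x \<longrightarrow>
     p (-x) * (\<integral>\<^sup>+z. q z * indicator {..-x} z \<partial>lborel) + q (-x) * (\<integral>\<^sup>+y. p y * indicator {..<-x} y \<partial>lborel)
   \<le> p x * (\<integral>\<^sup>+z. q z * indicator {..x} z \<partial>lborel) + q x * (\<integral>\<^sup>+y. p y * indicator {..<x} y \<partial>lborel)"
  using assms
proof eventually_elim
  case (elim x)
  show ?case
  proof
    assume x: "0 \<le> x"
    have "(\<integral>\<^sup>+z. q z * indicator {..-x} z \<partial>lborel) \<le> (\<integral>\<^sup>+z. q z * indicator {..x} z \<partial>lborel)"
      by (intro nn_integral_mono mult_left_mono) (use x in \<open>auto split: split_indicator\<close>)
    moreover have "(\<integral>\<^sup>+z. p z * indicator {..<-x} z \<partial>lborel) \<le> (\<integral>\<^sup>+z. p z * indicator {..<x} z \<partial>lborel)"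
      by (intro nn_integral_mono mult_left_mono) (use x in \<open>auto split: split_indicator\<close>)
    ultimately show "p (-x) * (\<integral>\<^sup>+z. q z * indicator {..-x} z \<partial>lborel) + q (-x) * (\<integral>\<^sup>+y. p y * indicator {..<-x} y \<partial>lborel)
   \<le> p x * (\<integral>\<^sup>+z. q z * indicator {..x} z \<partial>lborel) + q x * (\<integral>\<^sup>+y. p y * indicator {..<x} y \<partial>lborel)"
      using elim x by (intro add_mono mult_mono) auto
  qed
qed

lemma (in prob_space) indep_vars_Max:
  fixes X :: "'i \<Rightarrow> 'a \<Rightarrow> real"
  assumes I: "finite I" "i \<notin> I" and indep: "indep_vars (\<lambda>_. borel) X (insert i I)"
  shows "indep_var borel (X i) borel (\<lambda>\<omega>. Max ((\<lambda>i. X i \<omega>)`I))"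
proof -
  have "indep_var
    borel ((\<lambda>f. f i) \<circ> (\<lambda>\<omega>. restrict (\<lambda>i. X i \<omega>) {i}))
    borel ((\<lambda>f. Max (f`I)) \<circ> (\<lambda>\<omega>. restrict (\<lambda>i. X i \<omega>) I))"
    using I by (intro indep_var_compose[OF indep_var_restrict[OF indep]] borel_measurable_Max) auto
  also have "((\<lambda>f. f i) \<circ> (\<lambda>\<omega>. restrict (\<lambda>i. X i \<omega>) {i})) = X i"
    by auto
  also have "((\<lambda>f. Max (f`I)) \<circ> (\<lambda>\<omega>. restrict (\<lambda>i. X i \<omega>) I)) = (\<lambda>\<omega>. Max ((\<lambda>i. X i \<omega>)`I))"
    by (auto cong: rev_conj_cong)
  finally show ?thesis
    unfolding indep_var_def .
qed

theorem lemma25: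
  fixes M :: "'a measure" and Z :: "nat \<Rightarrow> 'a \<Rightarrow> real" and k :: nat
    and f :: "nat \<Rightarrow> real \<Rightarrow> ennreal" and g :: "real \<Rightarrow> ennreal"
  assumes "prob_space M"
    and "k \<ge> 1"
    and "prob_space.indep_vars M (\<lambda>_. borel) Z {1..k}"
    and "\<And>i. i \<in> {1..k} \<Longrightarrow> distributed M lborel (Z i) (f i)"
    and "\<And>i. i \<in> {1..k} \<Longrightarrow> symmetric_rv M (Z i)"
    and "distributed M lborel (\<lambda>\<omega>. Max ((\<lambda>i. Z i \<omega>) ` {1..k})) g"
  shows "AE x in lborel. 0 \<le> x \<longrightarrow> g (- x) \<le> g x"
proof -
  interpret prob_space M by fact
  define Y where "Y = (\<lambda>n \<omega>. Max ((\<lambda>i. Z i \<omega>) ` {1..n}))"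
  have fsym: "AE x in lborel. 0 \<le> x \<longrightarrow> f i (-x) \<le> f i x" if "i \<in> {1..k}" for i
    using sym_density[OF assms(1) assms(4)[OF that] assms(5)[OF that]] by eventually_elim auto
  have main: "1 \<le> n \<longrightarrow> n \<le> k \<longrightarrow> (\<exists>h. distributed M lborel (Y n) h \<and> (AE x in lborel. 0 \<le> x \<longrightarrow> h (-x) \<le> h x))" for n
  proof (induction n)
    case 0 then show ?case by simp
  next
    case (Suc n)
    show ?case
    proof (intro impI)
      assume n: "1 \<le> Suc n" "Suc n \<le> k"
      show "\<exists>h. distributed M lborel (Y (Suc n)) h \<and> (AE x in lborel. 0 \<le> x \<longrightarrow> h (-x) \<le> h x)"
      proof (cases "n = 0")
        case True
        have "Y (Suc n) = Z 1" using True by (auto simp: Y_def fun_eq_iff)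
        then show ?thesis using assms(4)[of 1] fsym[of 1] n by auto
      next
        case False
        then obtain h where h: "distributed M lborel (Y n) h" "AE x in lborel. 0 \<le> x \<longrightarrow> h (-x) \<le> h x"
          using Suc.IH n by auto
        have eq: "Y (Suc n) = (\<lambda>\<omega>. max (Z (Suc n) \<omega>) (Y n \<omega>))"
        proof
          fix \<omega>
          have "{1..Suc n} = insert (Suc n) {1..n}" by auto
          then show "Y (Suc n) \<omega> = max (Z (Suc n) \<omega>) (Y n \<omega>)"
            unfolding Y_def using False by (simp add: Max_insert)
        qed
        have ind: "indep_var borel (Z (Suc n)) borel (Y n)"
          unfolding Y_def
        proof (rule indep_vars_Max)
          show "indep_vars (\<lambda>_. borel) Z (insert (Suc n) {1..n})"
            by (rule indep_vars_subset[OF assms(3)]) (use n in auto)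
        qed auto
        have sn: "Suc n \<in> {1..k}" using n by auto
        show ?thesis
          unfolding eq
          apply (rule exI, rule conjI)
           apply (rule max_density[OF assms(1) ind assms(4)[OF sn] h(1)])
          apply (rule max_density_ineq[OF fsym[OF sn] h(2)])
          done
      qed
    qed
  qed
  obtain h where h: "distributed M lborel (Y k) h" "AE x in lborel. 0 \<le> x \<longrightarrow> h (-x) \<le> h x"
    using main[of k] assms(2) by auto
  have "AE x in lborel. g x = h x"
    by (rule distributed_unique[OF assms(6)]) (use h(1) in \<open>simp add: Y_def\<close>)
  moreover from AE_reflect[OF this] have "AE x in lborel. g (-x) = h (-x)" .
  ultimately show ?thesis using h(2) by eventually_elim auto
qed

end
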